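(* Let $G=(V,E)$ be a graph and $[W,F]$ a non-maximal utter clique of $G$. Then the inequality $x(W)+y(F\cap E(V\setminus W))-y(E(W))\le 1$ is dominated by (i.e., is implied as a nonnegative combination of) the inequalities $x(W')+y(F'\cap E(V\setminus W'))-y(E(W'))\le 1$ for all maximal utter cliques $[W',F']$ of $G$, $y(\delta(v))\le x_v$ for all $v\in V$, and $-y_e\le 0$ for all $e\in E$.
   Context: All graphs are simple and connected. For $W\subseteq V$, $E(W)$ is the set of edges with both endpoints in $W$, $\delta(v)$ is the set of edges incident to $v$, and $x(A)=\sum_{a\in A}x_a$. The utter graph $u(G)$ has vertex set $V\cup E$, where two elements are adjacent iff: they are two adjacent vertices of $G$; or a vertex and an edge incident to it; or two edges sharing an endpoint; or a vertex $w$ and an edge $uv$ not containing $w$ with $wu\in E$ or $wv\in E$; or two disjoint edges $uv,xy$ such that some edge of $G$ joins $\{u,v\}$ to $\{x,y\}$. For $W\subseteq V$, $F\subseteq E$, $[W,F]$ is an utter clique if $W\cup F$ is a clique of $u(G)$; it is maximal if no element of $V\setminus W$ or $E\setminus F$ can be added while remaining an utter clique. *)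

theory Defs
  imports Complex_Main
begin

definition simple_graph :: "'a set \<Rightarrow> 'a set set \<Rightarrow> bool" where
  "simple_graph V E \<longleftrightarrow> finite V \<and> (\<forall>e\<in>E. e \<subseteq> V \<and> card e = 2)"

definition adj :: "'a set set \<Rightarrow> 'a \<Rightarrow> 'a \<Rightarrow> bool" where
  "adj E u v \<longleftrightarrow> {u, v} \<in> E"

definition connected_graph :: "'a set \<Rightarrow> 'a set set \<Rightarrow> bool" where
  "connected_graph V E \<longleftrightarrow> V \<noteq> {} \<and> (\<forall>u\<in>V. \<forall>v\<in>V. (adj E)\<^sup>*\<^sup>* u v)"

text \<open>Adjacency in the utter graph u(G), split by element kinds.\<close>
definition utter_vv :: "'a set set \<Rightarrow> 'a \<Rightarrow> 'a \<Rightarrow> bool" where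
  "utter_vv E u w \<longleftrightarrow> {u, w} \<in> E"

definition utter_ve :: "'a set set \<Rightarrow> 'a \<Rightarrow> 'a set \<Rightarrow> bool" where
  "utter_ve E w f \<longleftrightarrow> w \<in> f \<or> (w \<notin> f \<and> (\<exists>u\<in>f. {w, u} \<in> E))"

definition utter_ee :: "'a set set \<Rightarrow> 'a set \<Rightarrow> 'a set \<Rightarrow> bool" where
  "utter_ee E e f \<longleftrightarrow> e \<inter> f \<noteq> {} \<or> (e \<inter> f = {} \<and> (\<exists>u\<in>e. \<exists>v\<in>f. {u, v} \<in> E))"

definition utter_clique :: "'a set \<Rightarrow> 'a set set \<Rightarrow> 'a set \<Rightarrow> 'a set set \<Rightarrow> bool" where
  "utter_clique V E W F \<longleftrightarrow> W \<subseteq> V \<and> F \<subseteq> E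
     \<and> (\<forall>u\<in>W. \<forall>w\<in>W. u \<noteq> w \<longrightarrow> utter_vv E u w)
     \<and> (\<forall>w\<in>W. \<forall>f\<in>F. utter_ve E w f)
     \<and> (\<forall>e\<in>F. \<forall>f\<in>F. e \<noteq> f \<longrightarrow> utter_ee E e f)"

definition maximal_utter_clique :: "'a set \<Rightarrow> 'a set set \<Rightarrow> 'a set \<Rightarrow> 'a set set \<Rightarrow> bool" where
  "maximal_utter_clique V E W F \<longleftrightarrow> utter_clique V E W F
     \<and> (\<forall>v\<in>V - W. \<not> utter_clique V E (insert v W) F)
     \<and> (\<forall>e\<in>E - F. \<not> utter_clique V E W (insert e F))"

definition clique_coef_x :: "'a set \<Rightarrow> 'a \<Rightarrow> real" where
  "clique_coef_x W v = (if v \<in> W then 1 else 0)"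

definition clique_coef_y :: "'a set \<Rightarrow> 'a set \<Rightarrow> 'a set set \<Rightarrow> 'a set \<Rightarrow> real" where
  "clique_coef_y V W F e =
     (if e \<in> F \<and> e \<subseteq> V - W then 1 else 0) - (if e \<subseteq> W then 1 else 0)"

end

theory Submission
  imports Defs
begin

lemma ext_maximal:
  assumes "simple_graph V E" "utter_clique V E W F"
  shows "\<exists>W' F'. maximal_utter_clique V E W' F' \<and> W \<subseteq> W' \<and> F \<subseteq> F'"
proof -
  have fV: "finite V" using assms(1) by (simp add: simple_graph_def)
  have fE: "finite E"
  proof -
    have "E \<subseteq> Pow V" using assms(1) by (auto simp: simple_graph_def)
    thus ?thesis using fV finite_subset by blast
  qed
  define P where "P = (\<lambda>p. utter_clique V E (fst p) (snd p) \<and> W \<subseteq> fst p \<and> F \<subseteq> snd p)"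
  define f where "f = (\<lambda>p::'a set \<times> 'a set set. card (fst p) + card (snd p))"
  have P0: "P (W, F)" using assms(2) by (simp add: P_def)
  have bnd: "\<forall>y. P y \<longrightarrow> f y < card V + card E + 1"
  proof (intro allI impI)
    fix y assume "P y"
    hence "fst y \<subseteq> V" "snd y \<subseteq> E" by (auto simp: P_def utter_clique_def)
    hence "card (fst y) \<le> card V" "card (snd y) \<le> card E" using fV fE card_mono by blast+
    thus "f y < card V + card E + 1" by (simp add: f_def)
  qed
  obtain p where pP: "P p" and pmax: "\<forall>y. P y \<longrightarrow> f y \<le> f p"
    using ex_has_greatest_nat[OF P0 bnd] by blast
  obtain W' F' where p: "p = (W', F')" by (cases p)
  have uc: "utter_clique V E W' F'" and sub: "W \<subseteq> W'" "F \<subseteq> F'" using pP p by (auto simp: P_def)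
  have fW': "finite W'" using uc fV by (meson finite_subset utter_clique_def)
  have fF': "finite F'" using uc fE by (meson finite_subset utter_clique_def)
  have "maximal_utter_clique V E W' F'"
    unfolding maximal_utter_clique_def
  proof (intro conjI ballI uc notI)
    fix v assume v: "v \<in> V - W'" and u: "utter_clique V E (insert v W') F'"
    hence "P (insert v W', F')" using sub by (auto simp: P_def)
    hence "f (insert v W', F') \<le> f p" using pmax by blast
    thus False using v fW' p by (simp add: f_def)
  next
    fix e assume v: "e \<in> E - F'" and u: "utter_clique V E W' (insert e F')"
    hence "P (W', insert e F')" using sub by (auto simp: P_def)
    hence "f (W', insert e F') \<le> f p" using pmax by blast
    thus False using v fF' p by (simp add: f_def)
  qed
  thus ?thesis using sub by blast
qed

lemma sum_single:
  assumes "finite S" "C \<in> S"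
  shows "(\<Sum>(a, b)\<in>S. (if (a, b) = C then 1 else 0) * h a b) = (h (fst C) (snd C) :: real)"
proof -
  have "(\<Sum>(a, b)\<in>S. (if (a, b) = C then 1 else 0) * h a b) = (\<Sum>p\<in>S. if p = C then h (fst p) (snd p) else 0)"
    by (rule sum.cong) auto
  also have "\<dots> = h (fst C) (snd C)" using assms by (simp add: sum.delta')
  finally show ?thesis .
qed

theorem mainTheorem2:
  fixes V :: "'a set" and E :: "'a set set" and W :: "'a set" and F :: "'a set set"
  assumes "simple_graph V E" and "connected_graph V E"
    and "utter_clique V E W F" and "\<not> maximal_utter_clique V E W F"
  shows "\<exists>(lam::'a set \<times> 'a set set \<Rightarrow> real) (\<mu>::'a \<Rightarrow> real) (\<nu>::'a set \<Rightarrow> real).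
           (\<forall>C\<in>{(W', F'). maximal_utter_clique V E W' F'}. lam C \<ge> 0)
         \<and> (\<forall>v\<in>V. \<mu> v \<ge> 0) \<and> (\<forall>e\<in>E. \<nu> e \<ge> 0)
         \<and> (\<forall>v\<in>V. clique_coef_x W v =
               (\<Sum>(W', F')\<in>{(W', F'). maximal_utter_clique V E W' F'}. lam (W', F') * clique_coef_x W' v)
               - \<mu> v)
         \<and> (\<forall>e\<in>E. clique_coef_y V W F e =
               (\<Sum>(W', F')\<in>{(W', F'). maximal_utter_clique V E W' F'}. lam (W', F') * clique_coef_y V W' F' e)
               + (\<Sum>v\<in>e. \<mu> v) - \<nu> e)
         \<and> (\<Sum>(W', F')\<in>{(W', F'). maximal_utter_clique V E W' F'}. lam (W', F')) \<le> 1"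
proof -
  obtain W1 F1 where m: "maximal_utter_clique V E W1 F1" and sub: "W \<subseteq> W1" "F \<subseteq> F1"
    using ext_maximal[OF assms(1,3)] by blast
  have fV: "finite V" using assms(1) by (simp add: simple_graph_def)
  have fE: "finite E"
  proof -
    have "E \<subseteq> Pow V" using assms(1) by (auto simp: simple_graph_def)
    thus ?thesis using fV finite_subset by blast
  qed
  define S where "S = {(W', F'). maximal_utter_clique V E W' F'}"
  have fS: "finite S"
  proof -
    have "S \<subseteq> Pow V \<times> Pow E" by (auto simp: S_def maximal_utter_clique_def utter_clique_def)
    thus ?thesis using fV fE finite_subset by blast
  qed
  have CS: "(W1, F1) \<in> S" using m by (simp add: S_def)
  define lam :: "'a set \<times> 'a set set \<Rightarrow> real" where "lam = (\<lambda>p. if p = (W1, F1) then 1 else 0)"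
  define \<mu> :: "'a \<Rightarrow> real" where "\<mu> = (\<lambda>v. if v \<in> W1 - W then 1 else 0)"
  define \<nu> :: "'a set \<Rightarrow> real" where "\<nu> = (\<lambda>e. clique_coef_y V W1 F1 e + (\<Sum>v\<in>e. \<mu> v) - clique_coef_y V W F e)"
  have s1: "\<And>h. (\<Sum>(a, b)\<in>S. lam (a, b) * h a b) = h W1 F1"
    unfolding lam_def using sum_single[OF fS CS] by simp
  have s2: "(\<Sum>(a, b)\<in>S. lam (a, b)) = 1"
    using s1[of "\<lambda>a b. 1"] by simp
  have nu: "\<nu> e \<ge> 0" if e: "e \<in> E" for e
  proof -
    have "e \<subseteq> V" "card e = 2" using e assms(1) by (auto simp: simple_graph_def)
    then obtain a b where ab: "e = {a, b}" "a \<noteq> b" by (meson card_2_iff)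
    show ?thesis unfolding \<nu>_def \<mu>_def clique_coef_y_def using ab sub
      by (auto split: if_splits)
  qed
  show ?thesis
    unfolding S_def[symmetric]
    apply (rule exI[of _ lam], rule exI[of _ \<mu>], rule exI[of _ \<nu>])
    apply (intro conjI ballI)
    using nu s1 s2 sub
    by (auto simp: lam_def \<mu>_def \<nu>_def clique_coef_x_def)
qed

end
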